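(* Let $(U,d)$ be a complete separable ultrametric space. There exists a nested interval-partition $(I_t)_{t\ge0}$ such that $(U_I,d_I)$ is isometric to $(U,d)$.
   Context: A nested interval-partition is a càdlàg (Hausdorff distance between complements) map $t\mapsto I_t$, $t\ge0$, into open subsets of $(0,1)$ with $I_s\subseteq I_t$ for $s\le t$. $f_I(x)=\inf\{t\ge0:x\in I_t\}$ for $x\in[0,1]$, $d_I(x,y)=\mathbf 1_{\{x\ne y\}}\sup_{[x\wedge y,x\vee y]}f_I$. $U_I$ is the completion of the quotient of $(\{f_I=0\},d_I)$ by the relation $x\sim y$ iff $d_I(x,y)=0$. *)

theory Defs
  imports "HOL-Analysis.Analysis"
begin

definition hausdist :: "real set \<Rightarrow> real set \<Rightarrow> real" where
  "hausdist A B = max (SUP a\<in>A. infdist a B) (SUP b\<in>B. infdist b A)"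

definition compl01 :: "(real \<Rightarrow> real set) \<Rightarrow> real \<Rightarrow> real set" where
  "compl01 I t = {0..1} - I t"

text \<open>Nested interval-partition: for t \<ge> 0, I t is an open subset of (0,1),
  increasing in t, and t \<mapsto> [0,1] - I t is cadlag for the Hausdorff distance
  (right-continuous at every t \<ge> 0, left limits (nonempty compact sets) at every t > 0).\<close>
definition nested_interval_partition :: "(real \<Rightarrow> real set) \<Rightarrow> bool" where
  "nested_interval_partition I \<longleftrightarrow>
     (\<forall>t\<ge>0. open (I t) \<and> I t \<subseteq> {0<..<1}) \<and>
     (\<forall>s t. 0 \<le> s \<and> s \<le> t \<longrightarrow> I s \<subseteq> I t) \<and>
     (\<forall>t\<ge>0. ((\<lambda>s. hausdist (compl01 I s) (compl01 I t)) \<longlongrightarrow> 0) (at_right t)) \<and>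
     (\<forall>t>0. \<exists>K. compact K \<and> K \<noteq> {} \<and>
                ((\<lambda>s. hausdist (compl01 I s) K) \<longlongrightarrow> 0) (at_left t))"

text \<open>f_I(x) = inf {t \<ge> 0. x \<in> I t}, with inf of the empty set = \<infinity>.\<close>
definition fI :: "(real \<Rightarrow> real set) \<Rightarrow> real \<Rightarrow> ereal" where
  "fI I x = Inf ((\<lambda>t. ereal t) ` {t. 0 \<le> t \<and> x \<in> I t})"

definition dI :: "(real \<Rightarrow> real set) \<Rightarrow> real \<Rightarrow> real \<Rightarrow> ereal" where
  "dI I x y = (if x = y then 0 else Sup (fI I ` {min x y..max x y}))"

definition zeroset :: "(real \<Rightarrow> real set) \<Rightarrow> real set" where
  "zeroset I = {x \<in> {0..1}. fI I x = 0}"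

text \<open>(Y,dY) is (isometric to) the completion of the quotient of the pseudometric
  space (X,dX) by the relation dX x y = 0: (Y,dY) is a complete metric space and
  there is a distance-preserving map from X into Y with dense image.
  (Any distance-preserving map factors through the quotient, and the completion
  is unique up to isometry.)\<close>
definition is_completion_of_quotient ::
    "'a set \<Rightarrow> ('a \<Rightarrow> 'a \<Rightarrow> real) \<Rightarrow> 'b set \<Rightarrow> ('b \<Rightarrow> 'b \<Rightarrow> ereal) \<Rightarrow> bool" where
  "is_completion_of_quotient Y dY X dX \<longleftrightarrow>
     Metric_space Y dY \<and> Metric_space.mcomplete Y dY \<and>
     (\<exists>\<phi>. \<phi> ` X \<subseteq> Y \<and>
          (\<forall>x\<in>X. \<forall>y\<in>X. ereal (dY (\<phi> x) (\<phi> y)) = dX x y) \<and>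
          Metric_space.mtopology Y dY closure_of (\<phi> ` X) = Y)"

end

theory Submission
  imports Defs
begin


definition Bset :: "(real \<Rightarrow> real \<Rightarrow> bool) \<Rightarrow> real \<Rightarrow> real set" where
  "Bset Q t = {z. 0 < z \<and> z < 1 \<and> (\<exists>s>t. Q z s)}"

definition Ipart :: "(real \<Rightarrow> real \<Rightarrow> bool) \<Rightarrow> real \<Rightarrow> real set" where
  "Ipart Q t = {0<..<1} - closure (Bset Q t)"

lemma Bset_sub: "Bset Q t \<subseteq> {0..1}"
  by (auto simp: Bset_def)

lemma closure_Bset_sub: "closure (Bset Q t) \<subseteq> {0..1}"
  by (rule closure_minimal[OF Bset_sub]) simp

lemma Bset_mono: "t \<le> t' \<Longrightarrow> Bset Q t' \<subseteq> Bset Q t"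
  unfolding Bset_def by (auto intro: le_less_trans)

lemma Bset_union: "z \<in> Bset Q t \<Longrightarrow> \<exists>s>t. z \<in> Bset Q s"
proof -
  assume "z \<in> Bset Q t"
  then obtain s where s: "s > t" "Q z s" "0 < z" "z < 1" by (auto simp: Bset_def)
  have "s > (t+s)/2" using s by simp
  then have "z \<in> Bset Q ((t+s)/2)" unfolding Bset_def using s by blast
  moreover have "(t+s)/2 > t" using s by simp
  ultimately show ?thesis by blast
qed

lemma compl01_Ipart: "compl01 (Ipart Q) t = {0,1} \<union> closure (Bset Q t)"
  using closure_Bset_sub[of Q t] by (auto simp: compl01_def Ipart_def)

lemma compact_C: "compact ({0,1} \<union> closure (Bset Q t))"
proof -
  have "bounded ({0,1} \<union> closure (Bset Q t))"
  proof (rule bounded_subset[OF bounded_closed_interval])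
    show "{0,1} \<union> closure (Bset Q t) \<subseteq> {0..1::real}" using closure_Bset_sub[of Q t] by auto
  qed
  then show ?thesis by (simp add: compact_eq_bounded_closed closed_Un)
qed

lemma hausdist_sub:
  fixes A B :: "real set"
  assumes "A \<subseteq> B" "A \<noteq> {}" "B \<noteq> {}" "\<And>b. b \<in> B \<Longrightarrow> infdist b A \<le> e" "e \<ge> 0"
  shows "\<bar>hausdist A B\<bar> \<le> e"
proof -
  have 1: "(SUP a\<in>A. infdist a B) = 0"
  proof -
    have "(SUP a\<in>A. infdist a B) = (SUP a\<in>A. (0::real))"
      using assms(1) by (intro SUP_cong) (auto simp: infdist_zero)
    then show ?thesis using assms(2) by simp
  qed
  have 2: "(SUP b\<in>B. infdist b A) \<le> e"
    using assms(3,4) by (intro cSUP_least) auto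
  show ?thesis unfolding hausdist_def 1 using 2 assms(5) by auto
qed

lemma right_cont:
  assumes "t \<ge> 0"
  shows "((\<lambda>s. hausdist (compl01 (Ipart Q) s) (compl01 (Ipart Q) t)) \<longlongrightarrow> 0) (at_right t)"
proof (rule tendstoI)
  fix e :: real assume e: "e > 0"
  define E where "E = {0,1} \<union> Bset Q t"
  define C where "C = {0,1} \<union> closure (Bset Q t)"
  have cC: "compact C" unfolding C_def by (rule compact_C)
  have cov: "C \<subseteq> \<Union> ((\<lambda>p. ball p (e/2)) ` E)"
  proof
    fix b assume "b \<in> C"
    then consider "b \<in> {0,1}" | "b \<in> closure (Bset Q t)" unfolding C_def by blast
    then show "b \<in> \<Union> ((\<lambda>p. ball p (e/2)) ` E)"
    proof cases
      case 1 then show ?thesis using e unfolding E_def by force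
    next
      case 2
      then obtain p where "p \<in> Bset Q t" "dist p b < e/2" using e closure_approachable by (metis half_gt_zero)
      then show ?thesis unfolding E_def by (auto simp: dist_commute)
    qed
  qed
  obtain F where F: "F \<subseteq> E" "finite F" "C \<subseteq> \<Union> ((\<lambda>p. ball p (e/2)) ` F)"
    using compactE_image[OF cC _ cov] by blast
  have ev: "\<forall>p\<in>F. eventually (\<lambda>s. p \<in> {0,1} \<union> closure (Bset Q s)) (at_right t)"
  proof
    fix p assume "p \<in> F"
    then have "p \<in> E" using F by auto
    then consider "p \<in> {0,1}" | "p \<in> Bset Q t" unfolding E_def by blast
    then show "eventually (\<lambda>s. p \<in> {0,1} \<union> closure (Bset Q s)) (at_right t)"
    proof cases
      case 1 then show ?thesis by (auto intro: always_eventually)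
    next
      case 2
      then obtain s0 where s0: "s0 > t" "p \<in> Bset Q s0" using Bset_union by blast
      have "eventually (\<lambda>s. s < s0) (at_right t)"
        using s0(1) unfolding eventually_at_right_field by (auto intro!: exI[of _ s0])
      then show ?thesis
      proof (rule eventually_mono)
        fix s assume "s < s0"
        then have "p \<in> Bset Q s" using Bset_mono[of s s0 Q] s0 by auto
        then show "p \<in> {0,1} \<union> closure (Bset Q s)" using closure_subset by blast
      qed
    qed
  qed
  have ev2: "eventually (\<lambda>s. (\<forall>p\<in>F. p \<in> {0,1} \<union> closure (Bset Q s)) \<and> s > t) (at_right t)"
    using eventually_ball_finite[OF F(2) ev] eventually_at_right_less[of t] by (simp add: eventually_conj_iff)
  show "eventually (\<lambda>s. dist (hausdist (compl01 (Ipart Q) s) (compl01 (Ipart Q) t)) 0 < e) (at_right t)"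
    using ev2
  proof (rule eventually_mono)
    fix s assume s: "(\<forall>p\<in>F. p \<in> {0,1} \<union> closure (Bset Q s)) \<and> s > t"
    have sub: "{0,1} \<union> closure (Bset Q s) \<subseteq> C"
      unfolding C_def using closure_mono[OF Bset_mono[of t s Q]] s by auto
    have "\<bar>hausdist ({0,1} \<union> closure (Bset Q s)) C\<bar> \<le> e/2"
    proof (rule hausdist_sub[OF sub])
      fix b assume "b \<in> C"
      then obtain p where p: "p \<in> F" "b \<in> ball p (e/2)" using F(3) by auto
      then have "p \<in> {0,1} \<union> closure (Bset Q s)" using s by auto
      then have "infdist b ({0,1} \<union> closure (Bset Q s)) \<le> dist b p" by (rule infdist_le)
      also have "\<dots> \<le> e/2" using p(2) by (simp add: dist_commute)
      finally show "infdist b ({0,1} \<union> closure (Bset Q s)) \<le> e/2" .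
    qed (auto simp: C_def e less_imp_le)
    then show "dist (hausdist (compl01 (Ipart Q) s) (compl01 (Ipart Q) t)) 0 < e"
      using e by (simp add: compl01_Ipart C_def)
  qed
qed



lemma left_lim:
  assumes "t > 0"
  shows "\<exists>K. compact K \<and> K \<noteq> {} \<and> ((\<lambda>s. hausdist (compl01 (Ipart Q) s) K) \<longlongrightarrow> 0) (at_left t)"
proof -
  define C where "C s = {0,1} \<union> closure (Bset Q s)" for s
  define K where "K = (\<Inter>s\<in>{s. s < t}. C s)"
  have Csub: "C s \<subseteq> {0..1}" for s unfolding C_def using closure_Bset_sub[of Q s] by auto
  have Cmono: "s \<le> s' \<Longrightarrow> C s' \<subseteq> C s" for s s'
    unfolding C_def using closure_mono[OF Bset_mono[of s s' Q]] by auto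
  have cC: "compact (C s)" for s unfolding C_def by (rule compact_C)
  have K0: "0 \<in> K" unfolding K_def C_def by auto
  have Ksub: "K \<subseteq> {0..1}" unfolding K_def using Csub[of "t-1"] by auto
  have cK: "compact K"
  proof -
    have "closed K" unfolding K_def using cC by (intro closed_INT) (auto intro: compact_imp_closed)
    moreover have "bounded K" using Ksub bounded_subset[OF bounded_closed_interval] by blast
    ultimately show ?thesis by (simp add: compact_eq_bounded_closed)
  qed
  have KC: "s < t \<Longrightarrow> K \<subseteq> C s" for s unfolding K_def by auto
  have "((\<lambda>s. hausdist (compl01 (Ipart Q) s) K) \<longlongrightarrow> 0) (at_left t)"
  proof (rule tendstoI)
    fix e :: real assume e: "e > 0"
    define G where "G s = C s \<inter> {a. e/2 \<le> infdist a K}" for s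
    have cG: "compact (G s)" for s
    proof -
      have "closed {a. e/2 \<le> infdist a K}"
        by (intro closed_Collect_le continuous_on_infdist continuous_on_id continuous_on_const)
      then show ?thesis unfolding G_def using cC[of s] by (simp add: compact_Int_closed)
    qed
    have "\<not> (\<Inter>(G ` {s. s < t}) \<noteq> {})"
    proof
      assume "\<Inter>(G ` {s. s < t}) \<noteq> {}"
      then obtain a where a: "\<And>s. s < t \<Longrightarrow> a \<in> G s" by auto
      then have "a \<in> K" unfolding K_def G_def by auto
      then have "infdist a K = 0" by (simp add: infdist_zero)
      moreover have "e/2 \<le> infdist a K" using a[of "t-1"] unfolding G_def by auto
      ultimately show False using e by simp
    qed
    then obtain F' where F': "finite F'" "F' \<subseteq> G ` {s. s < t}" "\<Inter>F' = {}"
      using compact_fip_Heine_Borel[of "G ` {s. s < t}"] cG by blast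
    obtain S' where S': "S' \<subseteq> {s. s < t}" "finite S'" "F' = G ` S'"
      using finite_subset_image[OF F'(1,2)] by blast
    have "S' \<noteq> {}" using F' S' by auto
    define m where "m = Max S'"
    have mS: "m \<in> S'" unfolding m_def using \<open>S' \<noteq> {}\<close> S'(2) by simp
    have mt: "m < t" using mS S'(1) by auto
    have Gm: "G m = {}"
    proof -
      have "G m \<subseteq> G s" if "s \<in> S'" for s
      proof -
        have "s \<le> m" unfolding m_def using that S'(2) by simp
        then show ?thesis unfolding G_def using Cmono by auto
      qed
      then have "G m \<subseteq> \<Inter>F'" using S'(3) by auto
      then show ?thesis using F'(3) by auto
    qed
    have ev: "eventually (\<lambda>s. m < s \<and> s < t) (at_left t)"
      using mt unfolding eventually_at_left_field by (auto intro!: exI[of _ m])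
    show "eventually (\<lambda>s. dist (hausdist (compl01 (Ipart Q) s) K) 0 < e) (at_left t)"
      using ev
    proof (rule eventually_mono)
      fix s assume s: "m < s \<and> s < t"
      have "G s \<subseteq> G m" unfolding G_def using Cmono[of m s] s by auto
      then have Gs: "G s = {}" using Gm by auto
      have "\<bar>hausdist K (C s)\<bar> \<le> e/2"
      proof (rule hausdist_sub[OF KC])
        fix b assume "b \<in> C s"
        then show "infdist b K \<le> e/2" using Gs unfolding G_def by fastforce
      qed (use s K0 e C_def in auto)
      moreover have "hausdist (C s) K = hausdist K (C s)" unfolding hausdist_def by simp
      moreover have "compl01 (Ipart Q) s = C s" by (simp add: compl01_Ipart C_def)
      ultimately show "dist (hausdist (compl01 (Ipart Q) s) K) 0 < e"
        using e by simp
    qed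
  qed
  then show ?thesis using cK K0 by blast
qed

lemma nip_Ipart: "nested_interval_partition (Ipart Q)"
  unfolding nested_interval_partition_def
proof (intro conjI allI impI)
  fix t :: real assume "0 \<le> t"
  show "open (Ipart Q t)" unfolding Ipart_def by (simp add: open_Diff)
  show "Ipart Q t \<subseteq> {0<..<1}" unfolding Ipart_def by auto
next
  fix s t :: real assume "0 \<le> s \<and> s \<le> t"
  then show "Ipart Q s \<subseteq> Ipart Q t"
    unfolding Ipart_def using closure_mono[OF Bset_mono[of s t Q]] by auto
qed (use right_cont left_lim in auto)



lemma fI_ge:
  assumes "\<And>t. 0 \<le> t \<Longrightarrow> t < r \<Longrightarrow> z \<notin> I t"
  shows "ereal r \<le> fI I z"
  unfolding fI_def
proof (rule Inf_greatest)
  fix x assume "x \<in> (\<lambda>t. ereal t) ` {t. 0 \<le> t \<and> z \<in> I t}"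
  then obtain t where "x = ereal t" "0 \<le> t" "z \<in> I t" by auto
  then show "ereal r \<le> x" using assms by force
qed

lemma fI_nonneg: "0 \<le> fI I z"
  using fI_ge[of 0 z I] by (simp add: zero_ereal_def)

lemma fI_le:
  assumes "\<And>t. t > r \<Longrightarrow> z \<in> I t" "0 \<le> r"
  shows "fI I z \<le> ereal r"
proof (rule ereal_le_epsilon2)
  fix e :: real assume e: "0 < e"
  have "z \<in> I (r + e)" using assms e by simp
  then have "fI I z \<le> ereal (r + e)" unfolding fI_def
    using assms e by (intro Inf_lower) auto
  then show "fI I z \<le> ereal r + ereal e" by simp
qed

lemma fI_zero_imp:
  assumes "fI I z = 0" "t > 0" "\<And>s t. 0 \<le> s \<Longrightarrow> s \<le> t \<Longrightarrow> I s \<subseteq> I t"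
  shows "z \<in> I t"
proof -
  have "Inf ((\<lambda>t. ereal t) ` {t. 0 \<le> t \<and> z \<in> I t}) < ereal t"
    using assms(1,2) unfolding fI_def by (simp add: zero_ereal_def)
  then obtain s where "0 \<le> s" "z \<in> I s" "ereal s < ereal t" by (auto simp: Inf_less_iff)
  then show ?thesis using assms(3)[of s t] by auto
qed

lemma zeroset_sub: "zeroset (Ipart Q) \<subseteq> {0<..<1}"
proof
  fix z assume z: "z \<in> zeroset (Ipart Q)"
  show "z \<in> {0<..<1}"
  proof (rule ccontr)
    assume "z \<notin> {0<..<1}"
    then have "{t. 0 \<le> t \<and> z \<in> Ipart Q t} = {}" unfolding Ipart_def by auto
    then have "fI (Ipart Q) z = \<infinity>" unfolding fI_def by (metis Inf_empty image_empty top_ereal_def)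
    then show False using z unfolding zeroset_def by simp
  qed
qed

lemma Ipart_mono: "0 \<le> s \<Longrightarrow> s \<le> t \<Longrightarrow> Ipart Q s \<subseteq> Ipart Q t"
  unfolding Ipart_def using closure_mono[OF Bset_mono[of s t Q]] by auto



locale UM = Metric_space M d for M :: "'a set" and d +
  fixes q :: "nat \<Rightarrow> 'a"
  assumes ultra: "\<And>x y z. x \<in> M \<Longrightarrow> y \<in> M \<Longrightarrow> z \<in> M \<Longrightarrow> d x z \<le> max (d x y) (d y z)"
    and qM: "\<And>n. q n \<in> M"
    and qdense: "\<And>x r. x \<in> M \<Longrightarrow> r > 0 \<Longrightarrow> \<exists>n. d (q n) x < r"
begin

definition iota :: "'a \<Rightarrow> real \<Rightarrow> nat" where
  "iota x r = (LEAST n. d (q n) x < r)"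

lemma iota: "x \<in> M \<Longrightarrow> r > 0 \<Longrightarrow> d (q (iota x r)) x < r"
  unfolding iota_def using qdense by (metis LeastI_ex)

lemma iota_cong:
  assumes "x \<in> M" "x' \<in> M" "d x x' < r"
  shows "iota x r = iota x' r"
proof -
  have "(\<lambda>n. d (q n) x < r) = (\<lambda>n. d (q n) x' < r)"
  proof
    fix n
    have "d (q n) x' \<le> max (d (q n) x) (d x x')" using ultra qM assms by blast
    moreover have "d (q n) x \<le> max (d (q n) x') (d x' x)" using ultra qM assms by blast
    ultimately show "(d (q n) x < r) = (d (q n) x' < r)" using assms(3) commute[of x x'] by auto
  qed
  then show ?thesis unfolding iota_def by simp
qed

definition prec :: "'a \<Rightarrow> 'a \<Rightarrow> bool" where
  "prec x y \<longleftrightarrow> x \<noteq> y \<and> iota x (d x y) < iota y (d x y)"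

lemma prec_total:
  assumes "x \<in> M" "y \<in> M" "x \<noteq> y"
  shows "prec x y \<or> prec y x"
proof -
  define r where "r = d x y"
  have r: "r > 0" unfolding r_def using assms by simp
  have "iota x r \<noteq> iota y r"
  proof
    assume eq: "iota x r = iota y r"
    have "d (q (iota x r)) x < r" using iota[OF assms(1) r] .
    moreover have "d (q (iota x r)) y < r" using iota[OF assms(2) r] eq by simp
    moreover have "d x y \<le> max (d x (q (iota x r))) (d (q (iota x r)) y)" using ultra qM assms by blast
    ultimately show False using commute[of x "q (iota x r)"] unfolding r_def by auto
  qed
  then show ?thesis unfolding prec_def r_def using assms(3) commute[of x y] by auto
qed

lemma prec_asym: "prec x y \<Longrightarrow> \<not> prec y x"
  unfolding prec_def using commute[of x y] by auto

lemma prec_trans: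
  assumes M: "x \<in> M" "y \<in> M" "z \<in> M" and xy: "prec x y" and yz: "prec y z"
  shows "prec x z \<and> d x z = max (d x y) (d y z)"
proof -
  define a where "a = d x y"
  define b where "b = d y z"
  have xz1: "d x z \<le> max a b" unfolding a_def b_def using ultra M by blast
  have yz1: "b \<le> max a (d x z)" unfolding b_def a_def using ultra[of y x z] M commute[of x y] by auto
  have xy1: "a \<le> max (d x z) b" unfolding b_def a_def using ultra[of x z y] M commute[of y z] by auto
  have ia: "iota x a < iota y a" using xy unfolding prec_def a_def by auto
  have ib: "iota y b < iota z b" using yz unfolding prec_def b_def by auto
  consider "a < b" | "a > b" | "a = b" by linarith
  then show ?thesis
  proof cases
    case 1
    then have dxz: "d x z = b" using xz1 yz1 by auto
    have "iota x b = iota y b" using iota_cong[OF M(1,2)] 1 unfolding a_def by auto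
    then have "iota x (d x z) < iota z (d x z)" using dxz ib by simp
    moreover have "x \<noteq> z" using dxz 1 M a_def by (metis nonneg not_less zero)
    ultimately show ?thesis unfolding prec_def using dxz 1 unfolding a_def b_def by auto
  next
    case 2
    then have dxz: "d x z = a" using xz1 xy1 by auto
    have "iota z a = iota y a" using iota_cong[OF M(3,2)] 2 commute[of z y] unfolding b_def by auto
    then have "iota x (d x z) < iota z (d x z)" using dxz ia by simp
    moreover have "x \<noteq> z" using dxz 2 M b_def by (metis nonneg not_less zero)
    ultimately show ?thesis unfolding prec_def using dxz 2 unfolding a_def b_def by auto
  next
    case 3
    have dxz: "d x z = a"
    proof (rule ccontr)
      assume "d x z \<noteq> a"
      then have "d x z < a" using xz1 3 by auto
      then have "iota x a = iota z a" using iota_cong[OF M(1,3)] by auto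
      then show False using ia ib 3 by simp
    qed
    have "a > 0" using xy M unfolding prec_def a_def by simp
    then have "x \<noteq> z" using dxz M by auto
    moreover have "iota x (d x z) < iota z (d x z)" using dxz ia ib 3 by simp
    ultimately show ?thesis unfolding prec_def using dxz 3 unfolding a_def b_def by auto
  qed
qed

definition pre :: "'a \<Rightarrow> 'a \<Rightarrow> bool" where
  "pre x y \<longleftrightarrow> x = y \<or> prec x y"

lemma pre_trans: "x \<in> M \<Longrightarrow> y \<in> M \<Longrightarrow> z \<in> M \<Longrightarrow> pre x y \<Longrightarrow> pre y z \<Longrightarrow> pre x z"
  unfolding pre_def using prec_trans by blast

lemma pre_conv:
  assumes M: "x \<in> M" "y \<in> M" "z \<in> M" and "pre x y" "pre y z"
  shows "d x y \<le> d x z \<and> d y z \<le> d x z"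
proof (cases "x = y")
  case True then show ?thesis using M by simp
next
  case False
  show ?thesis
  proof (cases "y = z")
    case True then show ?thesis using M by simp
  next
    case False
    then have "prec x y" "prec y z" using assms \<open>x \<noteq> y\<close> unfolding pre_def by auto
    then show ?thesis using prec_trans[OF M] by simp
  qed
qed

lemma pre_conv4:
  assumes M: "a \<in> M" "b \<in> M" "c \<in> M" "e \<in> M" and "pre a b" "pre b c" "pre c e"
  shows "d b c \<le> d a e"
proof -
  have "d b c \<le> d a c" using pre_conv[of a b c] assms by auto
  also have "\<dots> \<le> d a e" using pre_conv[of a c e] assms pre_trans[of a b c] by auto
  finally show ?thesis .
qed

definition lt :: "nat \<Rightarrow> nat \<Rightarrow> bool" where
  "lt i j \<longleftrightarrow> prec (q i) (q j) \<or> (q i = q j \<and> i < j)"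

lemma lt_trans:
  assumes "lt i j" "lt j k" shows "lt i k"
proof -
  consider "prec (q i) (q j)" "prec (q j) (q k)" | "prec (q i) (q j)" "q j = q k"
    | "q i = q j" "prec (q j) (q k)" | "q i = q j" "i < j" "q j = q k" "j < k"
    using assms unfolding lt_def by blast
  then show ?thesis
  proof cases
    case 1 then show ?thesis using prec_trans[OF qM qM qM, of i j k] unfolding lt_def by blast
  qed (auto simp: lt_def)
qed

lemma lt_irrefl: "\<not> lt i i"
  unfolding lt_def prec_def by simp

lemma lt_asym: "lt i j \<Longrightarrow> \<not> lt j i"
  using lt_trans lt_irrefl by blast

lemma lt_total: "i \<noteq> j \<Longrightarrow> lt i j \<or> lt j i"
proof (cases "q i = q j")
  case True
  assume "i \<noteq> j"
  then have "i < j \<or> j < i" by arith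
  then show ?thesis unfolding lt_def using True by auto
next
  case False
  then have "prec (q i) (q j) \<or> prec (q j) (q i)" using prec_total[OF qM qM, of i j] by blast
  then show ?thesis unfolding lt_def by blast
qed

lemma lt_pre: "i = j \<or> lt i j \<Longrightarrow> pre (q i) (q j)"
  unfolding lt_def pre_def by blast

end


definition w :: "nat \<Rightarrow> real" where "w n = (1/2) ^ Suc n"

lemma w_sums: "w sums 1" unfolding w_def by (rule power_half_series)
lemma w_pos: "w n > 0" unfolding w_def by simp
lemma w_summable: "summable w" using w_sums sums_summable by blast

definition ws :: "(nat \<Rightarrow> bool) \<Rightarrow> real" where
  "ws S = suminf (\<lambda>m. if S m then w m else 0)"

lemma ws_summable: "summable (\<lambda>m. if S m then w m else 0)"
  by (rule summable_comparison_test[OF _ w_summable]) (auto intro!: exI[of _ 0] simp: less_imp_le[OF w_pos])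

lemma ws_mono: "(\<And>m. S m \<Longrightarrow> T m) \<Longrightarrow> ws S \<le> ws T"
  unfolding ws_def by (rule suminf_le[OF _ ws_summable ws_summable]) (auto simp: less_imp_le[OF w_pos])

lemma ws_nonneg: "0 \<le> ws S"
  unfolding ws_def by (rule suminf_nonneg[OF ws_summable]) (auto simp: less_imp_le[OF w_pos])

lemma ws_le1: "ws S \<le> 1"
proof -
  have "ws S \<le> suminf w" unfolding ws_def
    by (rule suminf_le[OF _ ws_summable w_summable]) (auto simp: less_imp_le[OF w_pos])
  then show ?thesis using w_sums sums_unique by fastforce
qed

lemma ws_add: assumes "\<not> S n" shows "ws (\<lambda>m. S m \<or> m = n) = ws S + w n"
proof -
  have "(\<lambda>m. if S m \<or> m = n then w m else 0) = (\<lambda>m. (if S m then w m else 0) + (if m = n then w m else 0))"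
    using assms by (auto simp: fun_eq_iff)
  moreover have "suminf (\<lambda>m. if m = n then w m else 0) = w n" using sums_single[of n w] sums_unique by fastforce
  moreover have "summable (\<lambda>m. if m = n then w m else 0)" using sums_single[of n w] sums_summable by blast
  ultimately show ?thesis unfolding ws_def using suminf_add[OF ws_summable] by metis
qed

context UM
begin

definition P :: "nat \<Rightarrow> real" where "P n = ws (\<lambda>m. lt m n)"
definition atom :: "nat \<Rightarrow> real set" where "atom n = {P n <..< P n + w n}"
definition A :: "real set" where "A = (\<Union>n. atom n)"
definition idx :: "real \<Rightarrow> nat" where "idx z = (SOME n. z \<in> atom n)"
definition lab :: "real \<Rightarrow> 'a" where "lab z = q (idx z)"

lemma P_nonneg: "0 \<le> P n" unfolding P_def by (rule ws_nonneg)

lemma P_le1: "P n + w n \<le> 1"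
proof -
  have "P n + w n = ws (\<lambda>m. lt m n \<or> m = n)" unfolding P_def using ws_add[of "\<lambda>m. lt m n" n] lt_irrefl by simp
  then show ?thesis using ws_le1 by simp
qed

lemma P_order: "lt m n \<Longrightarrow> P m + w m \<le> P n"
proof -
  assume mn: "lt m n"
  have "P m + w m = ws (\<lambda>k. lt k m \<or> k = m)" unfolding P_def using ws_add[of "\<lambda>k. lt k m" m] lt_irrefl by simp
  also have "\<dots> \<le> P n" unfolding P_def by (rule ws_mono) (use mn lt_trans in blast)
  finally show ?thesis .
qed

lemma atom_sub: "atom n \<subseteq> {0<..<1}"
  unfolding atom_def using P_nonneg[of n] P_le1[of n] by auto

lemma A_sub: "A \<subseteq> {0<..<1}" unfolding A_def using atom_sub by blast

lemma atom_open: "open (atom n)" unfolding atom_def by simp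

lemma atom_lt:
  assumes "z \<in> atom i" "z' \<in> atom j" "z < z'"
  shows "i = j \<or> lt i j"
proof (rule ccontr)
  assume "\<not> (i = j \<or> lt i j)"
  then have "lt j i" using lt_total by blast
  then have "P j + w j \<le> P i" by (rule P_order)
  then show False using assms unfolding atom_def by auto
qed

lemma atom_disj: "z \<in> atom i \<Longrightarrow> z \<in> atom j \<Longrightarrow> i = j"
proof (rule ccontr)
  assume zi: "z \<in> atom i" and zj: "z \<in> atom j" and ne: "i \<noteq> j"
  then consider "lt i j" | "lt j i" using lt_total by blast
  then show False
  proof cases
    case 1 then show False using P_order[OF 1] zi zj unfolding atom_def by auto
  next
    case 2 then show False using P_order[OF 2] zi zj unfolding atom_def by auto
  qed
qed

lemma idx: "z \<in> atom n \<Longrightarrow> idx z = n"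
  unfolding idx_def by (rule some_equality) (auto intro: atom_disj)

lemma lab: "z \<in> atom n \<Longrightarrow> lab z = q n"
  unfolding lab_def using idx by simp

lemma lab_M: "lab z \<in> M" unfolding lab_def using qM by simp

lemma A_pre:
  assumes "z \<in> A" "z' \<in> A" "z \<le> z'"
  shows "pre (lab z) (lab z')"
proof -
  obtain i j where ij: "z \<in> atom i" "z' \<in> atom j" using assms unfolding A_def by auto
  have "i = j \<or> lt i j"
  proof (cases "z = z'")
    case True then show ?thesis using ij atom_disj by blast
  next
    case False then show ?thesis using atom_lt[OF ij] assms(3) by simp
  qed
  then show ?thesis using lt_pre lab ij by simp
qed

lemma conv_A:
  assumes "a \<in> A" "u \<in> A" "v \<in> A" "b \<in> A" "a \<le> u" "u \<le> v" "v \<le> b"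
  shows "d (lab u) (lab v) \<le> d (lab a) (lab b)"
  using pre_conv4[OF lab_M lab_M lab_M lab_M] A_pre assms by blast

lemma A_dense:
  assumes "0 \<le> \<alpha>" "\<alpha> < \<beta>" "\<beta> \<le> 1"
  shows "\<exists>z\<in>A. \<alpha> < z \<and> z < \<beta>"
proof (rule ccontr)
  assume "\<not> (\<exists>z\<in>A. \<alpha> < z \<and> z < \<beta>)"
  then have disj: "A \<inter> {\<alpha><..<\<beta>} = {}" by auto
  have meas: "range atom \<subseteq> sets lborel" unfolding atom_def by auto
  have dfam: "disjoint_family atom" unfolding disjoint_family_on_def using atom_disj by blast
  have "emeasure lborel A = (\<Sum>i. emeasure lborel (atom i))"
    unfolding A_def using suminf_emeasure[OF meas dfam] by simp
  also have "\<dots> = (\<Sum>i. ennreal (w i))"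
    unfolding atom_def using w_pos by (simp add: less_imp_le)
  also have "\<dots> = ennreal 1"
    using suminf_ennreal2[OF less_imp_le[OF w_pos] w_summable] w_sums sums_unique by metis
  finally have eA: "emeasure lborel A = ennreal 1" .
  have Asets: "A \<in> sets lborel" unfolding A_def using meas by auto
  have "emeasure lborel A + emeasure lborel {\<alpha><..<\<beta>} = emeasure lborel (A \<union> {\<alpha><..<\<beta>})"
    by (rule plus_emeasure[OF Asets _ disj]) simp
  also have "\<dots> \<le> emeasure lborel {0..1::real}"
    by (rule emeasure_mono) (use A_sub assms in auto)
  finally have "ennreal 1 + ennreal (\<beta> - \<alpha>) \<le> ennreal 1"
    using eA assms by simp
  then have "ennreal (1 + (\<beta> - \<alpha>)) \<le> ennreal 1"
    using assms by (simp add: ennreal_plus[symmetric] del: ennreal_1 ennreal_plus)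
  then have "1 + (\<beta> - \<alpha>) \<le> 1" using assms by (subst (asm) ennreal_le_iff) auto
  then show False using assms by simp
qed

end


context UM
begin

definition Qf :: "real \<Rightarrow> real \<Rightarrow> bool" where
  "Qf c s \<longleftrightarrow> (\<forall>e>0. \<exists>u v. u \<in> A \<and> v \<in> A \<and> \<bar>u - c\<bar> < e \<and> \<bar>v - c\<bar> < e \<and> s \<le> d (lab u) (lab v))"

lemma A_near_right:
  assumes "0 \<le> z" "z < 1" "e > 0"
  shows "\<exists>u\<in>A. z < u \<and> u < z + e"
  using A_dense[of z "min (z+e) 1"] assms by auto

lemma A_near_left:
  assumes "0 < z" "z \<le> 1" "e > 0"
  shows "\<exists>u\<in>A. z - e < u \<and> u < z"
  using A_dense[of "max (z-e) 0" z] assms by auto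

lemma A_ball:
  assumes "z \<in> A"
  shows "\<exists>n \<delta>. \<delta> > 0 \<and> (\<forall>u. \<bar>u - z\<bar> < \<delta> \<longrightarrow> u \<in> atom n) \<and> z \<in> atom n"
proof -
  obtain n where n: "z \<in> atom n" using assms unfolding A_def by auto
  then obtain \<delta> where "\<delta> > 0" "ball z \<delta> \<subseteq> atom n" using atom_open open_contains_ball by blast
  then show ?thesis using n by (intro exI[of _ n] exI[of _ \<delta>]) (auto simp: dist_real_def abs_minus_commute)
qed

lemma F2:
  assumes a: "a \<in> A" and b: "b \<in> A" and ab: "a < b" and r: "r = d (lab a) (lab b)" "r > 0"
  shows "\<exists>c. a < c \<and> c < b \<and> Qf c r"
proof -
  define S where "S = {x \<in> A. a \<le> x \<and> x \<le> b \<and> d (lab x) (lab a) < r}"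
  have aS: "a \<in> S" unfolding S_def using a ab r lab_M by auto
  have bdd: "bdd_above S" unfolding S_def by (auto intro: bdd_aboveI[of _ b])
  define c where "c = Sup S"
  have Sc: "x \<le> c" if "x \<in> S" for x unfolding c_def using that bdd by (rule cSup_upper)
  obtain n \<delta> where nd: "\<delta> > 0" "\<And>u. \<bar>u - a\<bar> < \<delta> \<Longrightarrow> u \<in> atom n" "a \<in> atom n" using A_ball[OF a] by blast
  define a' where "a' = min (a + \<delta>/2) ((a+b)/2)"
  have a'b: "a' \<le> (a+b)/2" "a < a'" unfolding a'_def using nd(1) ab by (auto simp: min_def)
  have "a' \<in> atom n" using nd ab unfolding a'_def by (intro nd(2)) auto
  then have "a' \<in> S" unfolding S_def A_def using lab[OF \<open>a' \<in> atom n\<close>] lab[OF nd(3)] ab r nd(1) qM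
    using a'b by auto
  then have ac: "a < c" using Sc[of a'] a'b by auto
  obtain m \<delta>' where md: "\<delta>' > 0" "\<And>u. \<bar>u - b\<bar> < \<delta>' \<Longrightarrow> u \<in> atom m" "b \<in> atom m" using A_ball[OF b] by blast
  have Sb: "x \<le> b - \<delta>'" if "x \<in> S" for x
  proof (rule ccontr)
    assume "\<not> x \<le> b - \<delta>'"
    moreover have "x \<le> b" "d (lab x) (lab a) < r" using that unfolding S_def by auto
    ultimately have "x \<in> atom m" using md by (intro md(2)) auto
    then have "lab x = lab b" using lab md(3) by simp
    then show False using \<open>d (lab x) (lab a) < r\<close> r commute by simp
  qed
  have cb: "c < b" using cSup_least[of S "b - \<delta>'"] aS Sb md(1) unfolding c_def by force
  have "Qf c r"
    unfolding Qf_def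
  proof (intro allI impI)
    fix e :: real assume e: "e > 0"
    have "c - e < Sup S" using e unfolding c_def by simp
    then obtain u where u: "u \<in> S" "c - e < u" using less_cSup_iff[of S] aS bdd by blast
    have "0 \<le> c" using ac A_sub a by auto
    have "b < 1" using A_sub b by auto
    have m1: "min (c+e) b \<le> 1" using \<open>b < 1\<close> by (simp add: min_def)
    have m2: "c < min (c+e) b" using e cb by simp
    obtain v where v: "v \<in> A" "c < v" "v < min (c + e) b"
      using A_dense[OF \<open>0 \<le> c\<close> m2 m1] by blast
    have "v \<notin> S" using Sc[of v] v by auto
    then have dv: "\<not> d (lab v) (lab a) < r" using v ac unfolding S_def by auto
    have du: "d (lab u) (lab a) < r" using u unfolding S_def by auto
    have "d (lab v) (lab a) \<le> max (d (lab v) (lab u)) (d (lab u) (lab a))" using ultra lab_M by blast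
    then have "r \<le> d (lab u) (lab v)" using dv du commute[of "lab v" "lab u"] by auto
    moreover have "\<bar>u - c\<bar> < e" using u Sc by auto
    moreover have "\<bar>v - c\<bar> < e" using v by auto
    ultimately show "\<exists>u v. u \<in> A \<and> v \<in> A \<and> \<bar>u - c\<bar> < e \<and> \<bar>v - c\<bar> < e \<and> r \<le> d (lab u) (lab v)"
      using u(1) v(1) unfolding S_def by blast
  qed
  then show ?thesis using ac cb by blast
qed

lemma F1:
  assumes a: "a \<in> A" and b: "b \<in> A" and c: "a < c" "c < b" and t: "t > d (lab a) (lab b)"
  shows "c \<notin> closure (Bset Qf t)"
proof -
  have disj: "{a<..<b} \<inter> Bset Qf t = {}"
  proof (rule ccontr)
    assume "{a<..<b} \<inter> Bset Qf t \<noteq> {}"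
    then obtain x s where x: "a < x" "x < b" "s > t" "Qf x s" unfolding Bset_def by auto
    define e where "e = min (x - a) (b - x)"
    have "e > 0" using x unfolding e_def by auto
    then obtain u v where uv: "u \<in> A" "v \<in> A" "\<bar>u - x\<bar> < e" "\<bar>v - x\<bar> < e" "s \<le> d (lab u) (lab v)"
      using x(4) unfolding Qf_def by blast
    have ru: "a < u" "u < b" "a < v" "v < b" using uv(3,4) unfolding e_def by auto
    have "d (lab u) (lab v) \<le> d (lab a) (lab b)"
    proof (cases "u \<le> v")
      case True then show ?thesis using conv_A[OF a uv(1,2) b] ru by auto
    next
      case False then show ?thesis using conv_A[OF a uv(2,1) b] ru commute[of "lab u" "lab v"] by auto
    qed
    then show False using uv(5) x(3) t by simp
  qed
  have "{a<..<b} \<inter> closure (Bset Qf t) = {}"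
    using open_Int_closure_eq_empty[of "{a<..<b}" "Bset Qf t"] disj by simp
  then show ?thesis using c by auto
qed

lemma atom_not:
  assumes "z \<in> A" "t > 0"
  shows "z \<notin> closure (Bset Qf t)"
proof -
  obtain n where n: "z \<in> atom n" using assms unfolding A_def by auto
  have disj: "atom n \<inter> Bset Qf t = {}"
  proof (rule ccontr)
    assume "atom n \<inter> Bset Qf t \<noteq> {}"
    then obtain x s where x: "x \<in> atom n" "s > t" "Qf x s" unfolding Bset_def by auto
    obtain e where e: "e > 0" "ball x e \<subseteq> atom n" using atom_open open_contains_ball x(1) by blast
    then obtain u v where uv: "u \<in> A" "v \<in> A" "\<bar>u - x\<bar> < e" "\<bar>v - x\<bar> < e" "s \<le> d (lab u) (lab v)"
      using x(3) unfolding Qf_def by blast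
    have "u \<in> atom n" "v \<in> atom n" using uv(3,4) e(2) by (auto simp: dist_real_def abs_minus_commute)
    then have "d (lab u) (lab v) = 0" using lab qM by simp
    then show False using uv(5) x(2) assms(2) by simp
  qed
  have "atom n \<inter> closure (Bset Qf t) = {}"
    using open_Int_closure_eq_empty[OF atom_open] disj by simp
  then show ?thesis using n by auto
qed

abbreviation "II \<equiv> Ipart Qf"

lemma A_zero: "z \<in> A \<Longrightarrow> z \<in> zeroset II"
proof -
  assume z: "z \<in> A"
  then have z01: "0 < z" "z < 1" using A_sub by auto
  have "fI II z \<le> ereal 0"
    by (rule fI_le) (use z z01 atom_not in \<open>auto simp: Ipart_def\<close>)
  then have "fI II z = 0" using fI_nonneg[of II z] by (simp add: zero_ereal_def)
  then show ?thesis unfolding zeroset_def using z01 by auto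
qed

lemma fI_ge_Q:
  assumes "0 < c" "c < 1" "Qf c r"
  shows "ereal r \<le> fI II c"
proof (rule fI_ge)
  fix t assume "0 \<le> t" "t < r"
  then have "c \<in> Bset Qf t" unfolding Bset_def using assms by auto
  then show "c \<notin> II t" unfolding Ipart_def using closure_subset by auto
qed

lemma fI_le_F1:
  assumes a: "a \<in> A" and b: "b \<in> A" and c: "a < c" "c < b"
  shows "fI II c \<le> ereal (d (lab a) (lab b))"
proof (rule fI_le)
  fix t assume "t > d (lab a) (lab b)"
  then have "c \<notin> closure (Bset Qf t)" using F1[OF a b c] by simp
  moreover have "0 < c" "c < 1" using A_sub a b c by auto
  ultimately show "c \<in> II t" unfolding Ipart_def by auto
qed simp

lemma cauchy:
  assumes z: "z \<in> zeroset II" and t: "t > 0"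
  shows "\<exists>\<delta>>0. \<forall>u v. u \<in> A \<longrightarrow> v \<in> A \<longrightarrow> \<bar>u - z\<bar> < \<delta> \<longrightarrow> \<bar>v - z\<bar> < \<delta> \<longrightarrow> d (lab u) (lab v) \<le> t"
proof -
  have "z \<in> II t"
    using fI_zero_imp[of II z t] z t Ipart_mono unfolding zeroset_def by blast
  then have "z \<notin> closure (Bset Qf t)" unfolding Ipart_def by auto
  then obtain \<delta> where \<delta>: "\<delta> > 0" "\<And>y. y \<in> Bset Qf t \<Longrightarrow> \<not> dist y z < \<delta>"
    using closure_approachable[of z "Bset Qf t"] by blast
  have main: "d (lab u) (lab v) \<le> t" if uv: "u \<in> A" "v \<in> A" "\<bar>u - z\<bar> < \<delta>" "\<bar>v - z\<bar> < \<delta>" "u < v" for u v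
  proof (rule ccontr)
    assume "\<not> d (lab u) (lab v) \<le> t"
    then have gt: "d (lab u) (lab v) > t" by simp
    then obtain c where c: "u < c" "c < v" "Qf c (d (lab u) (lab v))"
      using F2[OF uv(1,2,5) refl] t by auto
    have "0 < c" "c < 1" using A_sub uv c by auto
    then have "c \<in> Bset Qf t" unfolding Bset_def using c gt by auto
    moreover have "dist c z < \<delta>" using uv c by (auto simp: dist_real_def)
    ultimately show False using \<delta>(2) by blast
  qed
  have "d (lab u) (lab v) \<le> t" if uv: "u \<in> A" "v \<in> A" "\<bar>u - z\<bar> < \<delta>" "\<bar>v - z\<bar> < \<delta>" for u v
  proof -
    consider "u < v" | "u = v" | "v < u" by linarith
    then show ?thesis
    proof cases
      case 1 then show ?thesis using main uv by blast
    next
      case 2 then show ?thesis using t lab_M by simp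
    next
      case 3 then show ?thesis using main[of v u] uv commute by simp
    qed
  qed
  then show ?thesis using \<delta>(1) by blast
qed

end

locale UMC = UM +
  assumes comp: "mcomplete"
begin

definition phi :: "real \<Rightarrow> 'a" where
  "phi z = (SOME y. y \<in> M \<and> (\<forall>e>0. \<exists>\<delta>>0. \<forall>u\<in>A. \<bar>u - z\<bar> < \<delta> \<longrightarrow> d (lab u) y < e))"

lemma phi_ex:
  assumes z: "z \<in> zeroset II"
  shows "\<exists>y. y \<in> M \<and> (\<forall>e>0. \<exists>\<delta>>0. \<forall>u\<in>A. \<bar>u - z\<bar> < \<delta> \<longrightarrow> d (lab u) y < e)"
proof -
  have z01: "0 < z" "z < 1" using subsetD[OF zeroset_sub z] by auto
  have "\<forall>n. \<exists>u. u \<in> A \<and> z - 1/(Suc n) < u \<and> u < z"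
    using A_near_left[of z "1/Suc _"] z01 by auto
  then obtain s where s0: "\<And>n. s n \<in> A \<and> z - 1/(Suc n) < s n \<and> s n < z" by metis
  have s1: "\<bar>s n - z\<bar> < 1/Suc n" for n
  proof -
    have "\<bar>s n - z\<bar> = z - s n" using s0[of n] by simp
    then show ?thesis using s0[of n] by linarith
  qed
  have s: "\<And>n. s n \<in> A" "\<And>n. \<bar>s n - z\<bar> < 1/Suc n" using s0 s1 by auto
  define \<sigma> where "\<sigma> n = lab (s n)" for n
  have small: "\<exists>N. \<forall>n\<ge>N. \<bar>s n - z\<bar> < \<delta>" if d0: "\<delta> > 0" for \<delta>
  proof -
    obtain N where N: "1 / Suc N < \<delta>" using nat_approx_posE[OF d0] by blast
    have "\<bar>s n - z\<bar> < \<delta>" if "n \<ge> N" for n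
    proof -
      have "1 / real (Suc n) \<le> 1 / Suc N" using that by (simp add: frac_le)
      then show ?thesis using s(2)[of n] N by linarith
    qed
    then show ?thesis by blast
  qed
  have "MCauchy \<sigma>"
    unfolding MCauchy_def
  proof (intro conjI allI impI)
    show "range \<sigma> \<subseteq> M" unfolding \<sigma>_def using lab_M by auto
    fix e :: real assume e: "e > 0"
    obtain \<delta> where \<delta>: "\<delta> > 0" "\<And>u v. u \<in> A \<Longrightarrow> v \<in> A \<Longrightarrow> \<bar>u - z\<bar> < \<delta> \<Longrightarrow> \<bar>v - z\<bar> < \<delta> \<Longrightarrow> d (lab u) (lab v) \<le> e/2"
      using cauchy[OF z, of "e/2"] e by auto
    obtain N where N: "\<And>n. n \<ge> N \<Longrightarrow> \<bar>s n - z\<bar> < \<delta>" using small[OF \<delta>(1)] by blast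
    show "\<exists>N. \<forall>n n'. N \<le> n \<longrightarrow> N \<le> n' \<longrightarrow> d (\<sigma> n) (\<sigma> n') < e"
      using \<delta>(2)[OF s(1) s(1) N N] e unfolding \<sigma>_def by (intro exI[of _ N]) force
  qed
  then obtain y where "limitin mtopology \<sigma> y sequentially" using comp unfolding mcomplete_def by blast
  then have y: "y \<in> M" "\<And>e. e > 0 \<Longrightarrow> \<exists>N. \<forall>n\<ge>N. d (\<sigma> n) y < e"
    unfolding limit_metric_sequentially by (blast, meson)
  have "\<exists>\<delta>>0. \<forall>u\<in>A. \<bar>u - z\<bar> < \<delta> \<longrightarrow> d (lab u) y < e" if e: "e > 0" for e
  proof -
    obtain \<delta> where \<delta>: "\<delta> > 0" "\<And>u v. u \<in> A \<Longrightarrow> v \<in> A \<Longrightarrow> \<bar>u - z\<bar> < \<delta> \<Longrightarrow> \<bar>v - z\<bar> < \<delta> \<Longrightarrow> d (lab u) (lab v) \<le> e/2"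
      using cauchy[OF z, of "e/2"] e by auto
    obtain N1 where N1: "\<And>n. n \<ge> N1 \<Longrightarrow> \<bar>s n - z\<bar> < \<delta>" using small[OF \<delta>(1)] by blast
    obtain N2 where N2: "\<And>n. n \<ge> N2 \<Longrightarrow> d (\<sigma> n) y < e/2" using y(2)[of "e/2"] e by auto
    define n where "n = max N1 N2"
    have "d (lab u) y < e" if "u \<in> A" "\<bar>u - z\<bar> < \<delta>" for u
    proof -
      have "d (lab u) y \<le> d (lab u) (\<sigma> n) + d (\<sigma> n) y" using triangle lab_M y(1) unfolding \<sigma>_def by blast
      moreover have "d (lab u) (\<sigma> n) \<le> e/2" unfolding \<sigma>_def using \<delta>(2)[OF that(1) s(1) that(2) N1] unfolding n_def by simp
      moreover have "d (\<sigma> n) y < e/2" using N2 unfolding n_def by simp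
      ultimately show ?thesis by simp
    qed
    then show ?thesis using \<delta>(1) by blast
  qed
  then show ?thesis using y(1) by blast
qed

lemma phi:
  assumes "z \<in> zeroset II"
  shows "phi z \<in> M" "\<And>e. e > 0 \<Longrightarrow> \<exists>\<delta>>0. \<forall>u\<in>A. \<bar>u - z\<bar> < \<delta> \<longrightarrow> d (lab u) (phi z) < e"
  using someI_ex[OF phi_ex[OF assms]] unfolding phi_def[symmetric] by blast+

lemma phi_A:
  assumes "z \<in> A"
  shows "phi z = lab z"
proof -
  have zz: "z \<in> zeroset II" using A_zero assms by simp
  have "d (lab z) (phi z) < e" if "e > 0" for e
    using phi(2)[OF zz that] assms by force
  then have "\<not> d (lab z) (phi z) > 0" by (metis less_irrefl)
  then have "d (lab z) (phi z) \<le> 0" by simp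
  then have "d (lab z) (phi z) = 0" using nonneg[of "lab z" "phi z"] by linarith
  then show ?thesis using lab_M phi(1)[OF zz] by simp
qed

end


context UMC
begin

lemma zs01: "z \<in> zeroset II \<Longrightarrow> 0 < z \<and> z < 1"
  using subsetD[OF zeroset_sub] by auto

lemma zs_fI: "z \<in> zeroset II \<Longrightarrow> fI II z = 0"
  unfolding zeroset_def by auto

lemma iso_lt:
  assumes x: "x \<in> zeroset II" and y: "y \<in> zeroset II" and xy: "x < y"
  shows "Sup (fI II ` {x..y}) = ereal (d (phi x) (phi y))"
proof (rule antisym)
  define R where "R = d (phi x) (phi y)"
  have xM: "phi x \<in> M" and yM: "phi y \<in> M" using phi(1) x y by auto
  have x01: "0 < x" "x < 1" and y01: "0 < y" "y < 1" using zs01 x y by auto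
  show "Sup (fI II ` {x..y}) \<le> ereal (d (phi x) (phi y))"
  proof (rule Sup_least)
    fix f assume "f \<in> fI II ` {x..y}"
    then obtain c where c: "c \<in> {x..y}" "f = fI II c" by auto
    consider "c = x" | "c = y" | "x < c \<and> c < y" using c(1) by force
    then show "f \<le> ereal (d (phi x) (phi y))"
    proof cases
      case 1 then show ?thesis using c zs_fI[OF x] by (simp add: zero_ereal_def)
    next
      case 2 then show ?thesis using c zs_fI[OF y] by (simp add: zero_ereal_def)
    next
      case 3
      have "fI II c \<le> ereal R"
      proof (rule fI_le)
        fix t assume t: "t > R"
        define \<eta> where "\<eta> = (t - R) / 2"
        have \<eta>: "\<eta> > 0" using t unfolding \<eta>_def by simp
        obtain \<delta>x where dx: "\<delta>x > 0" "\<And>u. u \<in> A \<Longrightarrow> \<bar>u - x\<bar> < \<delta>x \<Longrightarrow> d (lab u) (phi x) < \<eta>"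
          using phi(2)[OF x \<eta>] by blast
        obtain \<delta>y where dy: "\<delta>y > 0" "\<And>u. u \<in> A \<Longrightarrow> \<bar>u - y\<bar> < \<delta>y \<Longrightarrow> d (lab u) (phi y) < \<eta>"
          using phi(2)[OF y \<eta>] by blast
        obtain u where u: "u \<in> A" "x < u" "u < x + min \<delta>x (c - x)"
          using A_near_right[of x "min \<delta>x (c - x)"] x01 dx 3 by auto
        obtain v where v: "v \<in> A" "y - min \<delta>y (y - c) < v" "v < y"
          using A_near_left[of y "min \<delta>y (y - c)"] y01 dy 3 by auto
        have uc: "u < c" and cv: "c < v" using u v by auto
        have du: "d (lab u) (phi x) < \<eta>" using dx(2)[OF u(1)] u by auto
        have dv: "d (lab v) (phi y) < \<eta>" using dy(2)[OF v(1)] v by auto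
        have "d (lab u) (lab v) \<le> d (lab u) (phi x) + d (phi x) (lab v)"
          using triangle lab_M xM by blast
        also have "d (phi x) (lab v) \<le> d (phi x) (phi y) + d (phi y) (lab v)"
          using triangle lab_M xM yM by blast
        finally have "d (lab u) (lab v) < t" using du dv commute[of "phi y" "lab v"] unfolding \<eta>_def R_def by simp
        then have "c \<notin> closure (Bset Qf t)" using F1[OF u(1) v(1) uc cv] by simp
        then show "c \<in> II t" unfolding Ipart_def using 3 x01 y01 by auto
      qed (simp add: R_def)
      then show ?thesis using c R_def by simp
    qed
  qed
  show "ereal (d (phi x) (phi y)) \<le> Sup (fI II ` {x..y})"
  proof (cases "R > 0")
    case False
    then have "R = 0" using nonneg[of "phi x" "phi y"] unfolding R_def by linarith
    moreover have "fI II x \<le> Sup (fI II ` {x..y})" using xy by (intro Sup_upper) auto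
    ultimately show ?thesis using zs_fI[OF x] unfolding R_def by (simp add: zero_ereal_def)
  next
    case True
    define m where "m = (x + y) / 2"
    obtain \<delta>x where dx: "\<delta>x > 0" "\<And>u. u \<in> A \<Longrightarrow> \<bar>u - x\<bar> < \<delta>x \<Longrightarrow> d (lab u) (phi x) < R"
      using phi(2)[OF x True] by blast
    obtain \<delta>y where dy: "\<delta>y > 0" "\<And>u. u \<in> A \<Longrightarrow> \<bar>u - y\<bar> < \<delta>y \<Longrightarrow> d (lab u) (phi y) < R"
      using phi(2)[OF y True] by blast
    obtain u where u: "u \<in> A" "x < u" "u < x + min \<delta>x (m - x)"
      using A_near_right[of x "min \<delta>x (m - x)"] x01 dx xy unfolding m_def by auto
    obtain v where v: "v \<in> A" "y - min \<delta>y (y - m) < v" "v < y"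
      using A_near_left[of y "min \<delta>y (y - m)"] y01 dy xy unfolding m_def by auto
    have uv: "u < v" using u v by auto
    have du: "d (lab u) (phi x) < R" using dx(2)[OF u(1)] u by auto
    have dv: "d (lab v) (phi y) < R" using dy(2)[OF v(1)] v by auto
    have Rle: "R \<le> d (lab u) (lab v)"
    proof (rule ccontr)
      assume "\<not> R \<le> d (lab u) (lab v)"
      then have lt: "d (lab u) (lab v) < R" by simp
      have "d (lab u) (phi y) \<le> max (d (lab u) (lab v)) (d (lab v) (phi y))" using ultra lab_M yM by blast
      then have "d (lab u) (phi y) < R" using lt dv by simp
      moreover have "d (phi x) (phi y) \<le> max (d (phi x) (lab u)) (d (lab u) (phi y))" using ultra lab_M xM yM by blast
      ultimately show False using du commute[of "phi x" "lab u"] unfolding R_def by auto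
    qed
    then obtain c where c: "u < c" "c < v" "Qf c (d (lab u) (lab v))"
      using F2[OF u(1) v(1) uv refl] True by auto
    have "0 < c" "c < 1" using c u v x01 y01 by auto
    then have "ereal (d (lab u) (lab v)) \<le> fI II c" using fI_ge_Q c(3) by blast
    moreover have "fI II c \<le> Sup (fI II ` {x..y})" using c u v by (intro Sup_upper) auto
    ultimately show ?thesis using Rle unfolding R_def by (meson ereal_less_eq(3) order_trans)
  qed
qed

lemma dI_iso:
  assumes x: "x \<in> zeroset II" and y: "y \<in> zeroset II"
  shows "ereal (d (phi x) (phi y)) = dI II x y"
proof -
  consider "x = y" | "x < y" | "y < x" by linarith
  then show ?thesis
  proof cases
    case 1 then show ?thesis using phi(1)[OF x] unfolding dI_def by (simp add: zero_ereal_def)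
  next
    case 2 then show ?thesis using iso_lt[OF x y] unfolding dI_def by (simp add: min_def max_def)
  next
    case 3 then show ?thesis using iso_lt[OF y x] commute[of "phi x" "phi y"] unfolding dI_def by (simp add: min_def max_def)
  qed
qed

lemma phi_dense: "mtopology closure_of (phi ` zeroset II) = M"
proof
  show "mtopology closure_of (phi ` zeroset II) \<subseteq> M"
    using closure_of_subset_topspace by fastforce
  show "M \<subseteq> mtopology closure_of (phi ` zeroset II)"
    unfolding metric_closure_of
  proof (intro subsetI CollectI conjI allI impI)
    fix x r assume x: "x \<in> M" and r: "(r::real) > 0"
    then obtain n where n: "d (q n) x < r" using qdense by blast
    define z where "z = P n + w n / 2"
    have za: "z \<in> atom n" unfolding atom_def z_def using w_pos[of n] by auto
    then have "z \<in> A" unfolding A_def by auto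
    then have "z \<in> zeroset II" "phi z = q n" using A_zero phi_A lab za by auto
    then have "q n \<in> phi ` zeroset II" by (metis image_eqI)
    moreover have "q n \<in> mball x r" using n qM x commute[of x "q n"] by simp
    ultimately show "\<exists>y\<in>phi ` zeroset II. y \<in> mball x r" by blast
  qed simp
qed

lemma main_UMC: "nested_interval_partition II \<and> is_completion_of_quotient M d (zeroset II) (dI II)"
  unfolding is_completion_of_quotient_def
proof (intro conjI exI[of _ phi])
  show "nested_interval_partition II" by (rule nip_Ipart)
  show "Metric_space M d" by (rule Metric_space_axioms)
  show "mcomplete" by (rule comp)
  show "phi ` zeroset II \<subseteq> M" using phi(1) by auto
  show "\<forall>x\<in>zeroset II. \<forall>y\<in>zeroset II. ereal (d (phi x) (phi y)) = dI II x y" using dI_iso by blast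
  show "mtopology closure_of (phi ` zeroset II) = M" by (rule phi_dense)
qed

end


theorem mainTheorem7:
  fixes U :: "'a set" and d :: "'a \<Rightarrow> 'a \<Rightarrow> real"
  assumes "Metric_space U d"
    and "Metric_space.mcomplete U d"
    and "separable_space (Metric_space.mtopology U d)"
    and "\<forall>x\<in>U. \<forall>y\<in>U. \<forall>z\<in>U. d x z \<le> max (d x y) (d y z)"
  shows "\<exists>I. nested_interval_partition I \<and>
             is_completion_of_quotient U d (zeroset I) (dI I)"
proof (cases "U = {}")
  case True
  define I where "I = Ipart (\<lambda>_ _. True)"
  have Iempty: "I t = {}" for t
  proof -
    have "Bset (\<lambda>_ _. True) t = {0<..<1}" unfolding Bset_def by (auto intro: gt_ex)
    then show ?thesis unfolding I_def Ipart_def using closure_subset by blast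
  qed
  have "zeroset I = {}"
  proof -
    have "fI I z = \<infinity>" for z unfolding fI_def Iempty by (simp add: top_ereal_def)
    then show ?thesis unfolding zeroset_def by simp
  qed
  then have "is_completion_of_quotient U d (zeroset I) (dI I)"
    unfolding is_completion_of_quotient_def using assms(1,2) True
    by (auto intro!: exI[of _ "\<lambda>_. undefined"])
  moreover have "nested_interval_partition I" unfolding I_def by (rule nip_Ipart)
  ultimately show ?thesis by blast
next
  case False
  interpret Metric_space U d by (rule assms(1))
  obtain C where C: "countable C" "C \<subseteq> U" "mtopology closure_of C = U"
    using assms(3) unfolding separable_space_def by auto
  have "C \<noteq> {}" using C(3) False by auto
  define q where "q = from_nat_into C"
  have rq: "range q = C" unfolding q_def using range_from_nat_into[OF \<open>C \<noteq> {}\<close> C(1)] .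
  interpret UMC U d q
  proof
    show "\<And>x y z. x \<in> U \<Longrightarrow> y \<in> U \<Longrightarrow> z \<in> U \<Longrightarrow> d x z \<le> max (d x y) (d y z)" using assms(4) by blast
    show "\<And>n. q n \<in> U" using rq C(2) by auto
    show "\<And>x r. x \<in> U \<Longrightarrow> r > 0 \<Longrightarrow> \<exists>n. d (q n) x < r"
    proof -
      fix x r assume "x \<in> U" "(r::real) > 0"
      then obtain y where "y \<in> C" "y \<in> mball x r" using C(3) unfolding metric_closure_of by blast
      then obtain n where "y = q n" using rq by auto
      then show "\<exists>n. d (q n) x < r" using \<open>y \<in> mball x r\<close> commute by auto
    qed
    show "mcomplete" by (rule assms(2))
  qed
  show ?thesis using main_UMC by blast
qed


end
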